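(* (i) On every weak nearly Sasakian manifold and on every weak nearly cosymplectic manifold $M^{2n+1}(f,Q,\xi,\eta,g)$, the vector field $\xi$ is geodesic ($\nabla_\xi\xi=0$); moreover, if $(\nabla_X\widetilde Q)Y=0$ for all $X\in TM$ and $Y\in\ker\eta$, then $\xi$ is a Killing vector field. (ii) There is no weak nearly cosymplectic structure satisfying $(\nabla_X\widetilde Q)Y=0$ for all $X\in TM$, $Y\in\ker\eta$, which is also a weak contact metric structure.
   Context: A weak almost contact metric structure on $M^{2n+1}$ consists of a $(1,1)$-tensor field $f$ of rank $2n$, a vector field $\xi$, a $1$-form $\eta$, a nonsingular $(1,1)$-tensor field $Q$ and a Riemannian metric $g$ such that $f^2=-Q+\eta\otimes\xi$, $\eta(\xi)=1$, $Q\xi=\xi$, $\ker\eta$ is $f$-invariant, and $g(fX,fY)=g(X,QY)-\eta(X)\eta(Y)$. $\widetilde Q=Q-\mathrm{id}$, $\nabla$ is the Levi-Civita connection of $g$. It is weak nearly Sasakian if $(\nabla_Xf)Y+(\nabla_Yf)X=2g(X,Y)\xi-\eta(Y)X-\eta(X)Y$ for all $X,Y$, and weak nearly cosymplectic if $(\nabla_Xf)Y+(\nabla_Yf)X=0$ for all $X,Y$. With $\Phi(X,Y)=g(X,fY)$ and $d\eta(X,Y)=\frac12\{X(\eta(Y))-Y(\eta(X))-\eta([X,Y])\}$, it is a weak contact metric structure if $d\eta=\Phi$. *)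

theory Defs
  imports "HOL-Analysis.Analysis"
begin

text \<open>Local coordinate model: the manifold is an open set U of real^'m (a chart),
  vector fields are maps real^'m => real^'m, (1,1)-tensor fields are matrix-valued,
  1-forms are covector-valued (eta(X) = eta p \<bullet> X p), and the metric is
  matrix-valued (g(X,Y) = X \<bullet> (g p *v Y)).\<close>

definition pd :: "'m::finite \<Rightarrow> (real^'m \<Rightarrow> real) \<Rightarrow> real^'m \<Rightarrow> real" where
  "pd i F p = frechet_derivative F (at p) (axis i 1)"

fun Ck :: "nat \<Rightarrow> (real^'m::finite) set \<Rightarrow> (real^'m \<Rightarrow> real) \<Rightarrow> bool" where
  "Ck 0 U F = continuous_on U F"
| "Ck (Suc k) U F = ((\<forall>p\<in>U. F differentiable (at p)) \<and> (\<forall>i. Ck k U (pd i F)))"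

definition smooth_fun :: "(real^'m::finite) set \<Rightarrow> (real^'m \<Rightarrow> real) \<Rightarrow> bool" where
  "smooth_fun U F \<longleftrightarrow> (\<forall>k. Ck k U F)"

definition smooth_vf :: "(real^'m::finite) set \<Rightarrow> (real^'m \<Rightarrow> real^'m) \<Rightarrow> bool" where
  "smooth_vf U X \<longleftrightarrow> (\<forall>i. smooth_fun U (\<lambda>p. X p $ i))"

definition smooth_tf :: "(real^'m::finite) set \<Rightarrow> (real^'m \<Rightarrow> real^'m^'m) \<Rightarrow> bool" where
  "smooth_tf U T \<longleftrightarrow> (\<forall>i j. smooth_fun U (\<lambda>p. T p $ i $ j))"

definition dir :: "(real^'m::finite \<Rightarrow> real^'m) \<Rightarrow> (real^'m \<Rightarrow> real) \<Rightarrow> real^'m \<Rightarrow> real" where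
  "dir X F p = (\<Sum>i\<in>UNIV. X p $ i * pd i F p)"

definition lie_bracket :: "(real^'m::finite \<Rightarrow> real^'m) \<Rightarrow> (real^'m \<Rightarrow> real^'m) \<Rightarrow> real^'m \<Rightarrow> real^'m" where
  "lie_bracket X Y p = (\<chi> k. dir X (\<lambda>q. Y q $ k) p - dir Y (\<lambda>q. X q $ k) p)"

definition gv :: "(real^'m::finite \<Rightarrow> real^'m^'m) \<Rightarrow> real^'m \<Rightarrow> real^'m \<Rightarrow> real^'m \<Rightarrow> real" where
  "gv g p u v = u \<bullet> (g p *v v)"

definition riemannian :: "(real^'m::finite) set \<Rightarrow> (real^'m \<Rightarrow> real^'m^'m) \<Rightarrow> bool" where
  "riemannian U g \<longleftrightarrow> smooth_tf U g \<and>
     (\<forall>p\<in>U. transpose (g p) = g p \<and> (\<forall>v. v \<noteq> 0 \<longrightarrow> v \<bullet> (g p *v v) > 0))"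

definition christoffel :: "(real^'m::finite \<Rightarrow> real^'m^'m) \<Rightarrow> 'm \<Rightarrow> 'm \<Rightarrow> 'm \<Rightarrow> real^'m \<Rightarrow> real" where
  "christoffel g k i j p = (1/2) * (\<Sum>l\<in>UNIV. matrix_inv (g p) $ k $ l *
      (pd i (\<lambda>q. g q $ j $ l) p + pd j (\<lambda>q. g q $ i $ l) p - pd l (\<lambda>q. g q $ i $ j) p))"

definition nabla :: "(real^'m::finite \<Rightarrow> real^'m^'m) \<Rightarrow> (real^'m \<Rightarrow> real^'m) \<Rightarrow> (real^'m \<Rightarrow> real^'m) \<Rightarrow> real^'m \<Rightarrow> real^'m" where
  "nabla g X Y p = (\<chi> k. dir X (\<lambda>q. Y q $ k) p +
      (\<Sum>i\<in>UNIV. \<Sum>j\<in>UNIV. christoffel g k i j p * X p $ i * Y p $ j))"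

definition nablaT :: "(real^'m::finite \<Rightarrow> real^'m^'m) \<Rightarrow> (real^'m \<Rightarrow> real^'m^'m) \<Rightarrow> (real^'m \<Rightarrow> real^'m) \<Rightarrow> (real^'m \<Rightarrow> real^'m) \<Rightarrow> real^'m \<Rightarrow> real^'m" where
  "nablaT g T X Y p = nabla g X (\<lambda>q. T q *v Y q) p - T p *v nabla g X Y p"

text \<open>Killing vector field: Lie derivative of g along xi vanishes, in coordinates
  (L_xi g)_ij = xi^k d_k g_ij + g_kj d_i xi^k + g_ik d_j xi^k.\<close>
definition killing :: "(real^'m::finite) set \<Rightarrow> (real^'m \<Rightarrow> real^'m^'m) \<Rightarrow> (real^'m \<Rightarrow> real^'m) \<Rightarrow> bool" where
  "killing U g xi \<longleftrightarrow> (\<forall>p\<in>U. \<forall>i j.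
      dir xi (\<lambda>q. g q $ i $ j) p
      + (\<Sum>k\<in>UNIV. g p $ k $ j * pd i (\<lambda>q. xi q $ k) p)
      + (\<Sum>k\<in>UNIV. g p $ i $ k * pd j (\<lambda>q. xi q $ k) p) = 0)"

text \<open>The (1,1)-tensor eta \<otimes> xi : X \<mapsto> eta(X) xi, as a matrix.\<close>
definition eta_xi :: "real^'m::finite \<Rightarrow> real^'m \<Rightarrow> real^'m^'m" where
  "eta_xi e x = (\<chi> i j. x $ i * e $ j)"

definition weak_acm :: "(real^'m::finite) set \<Rightarrow> (real^'m \<Rightarrow> real^'m^'m) \<Rightarrow> (real^'m \<Rightarrow> real^'m^'m) \<Rightarrow>
    (real^'m \<Rightarrow> real^'m) \<Rightarrow> (real^'m \<Rightarrow> real^'m) \<Rightarrow> (real^'m \<Rightarrow> real^'m^'m) \<Rightarrow> bool" where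
  "weak_acm U f Q xi eta g \<longleftrightarrow>
     open U \<and> riemannian U g \<and> smooth_tf U f \<and> smooth_tf U Q \<and> smooth_vf U xi \<and> smooth_vf U eta \<and>
     (\<forall>p\<in>U.
        rank (f p) = CARD('m) - 1 \<and>
        f p ** f p = - Q p + eta_xi (eta p) (xi p) \<and>
        eta p \<bullet> xi p = 1 \<and>
        Q p *v xi p = xi p \<and>
        invertible (Q p) \<and>
        (\<forall>v. eta p \<bullet> v = 0 \<longrightarrow> eta p \<bullet> (f p *v v) = 0) \<and>
        (\<forall>u v. gv g p (f p *v u) (f p *v v) = gv g p u (Q p *v v) - (eta p \<bullet> u) * (eta p \<bullet> v)))"

definition weak_nearly_sasakian where
  "weak_nearly_sasakian U f Q xi eta g \<longleftrightarrow> weak_acm U f Q xi eta g \<and>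
     (\<forall>X Y. smooth_vf U X \<longrightarrow> smooth_vf U Y \<longrightarrow> (\<forall>p\<in>U.
        nablaT g f X Y p + nablaT g f Y X p
          = (2 * gv g p (X p) (Y p)) *\<^sub>R xi p - (eta p \<bullet> Y p) *\<^sub>R X p - (eta p \<bullet> X p) *\<^sub>R Y p))"

definition weak_nearly_cosymplectic where
  "weak_nearly_cosymplectic U f Q xi eta g \<longleftrightarrow> weak_acm U f Q xi eta g \<and>
     (\<forall>X Y. smooth_vf U X \<longrightarrow> smooth_vf U Y \<longrightarrow> (\<forall>p\<in>U.
        nablaT g f X Y p + nablaT g f Y X p = 0))"

definition d_eta where
  "d_eta eta X Y p = (1/2) * (dir X (\<lambda>q. eta q \<bullet> Y q) p - dir Y (\<lambda>q. eta q \<bullet> X q) p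
                              - eta p \<bullet> lie_bracket X Y p)"

definition weak_contact_metric where
  "weak_contact_metric U f Q xi eta g \<longleftrightarrow> weak_acm U f Q xi eta g \<and>
     (\<forall>X Y. smooth_vf U X \<longrightarrow> smooth_vf U Y \<longrightarrow> (\<forall>p\<in>U.
        d_eta eta X Y p = gv g p (X p) (f p *v Y p)))"

definition Qtilde_parallel_ker where
  "Qtilde_parallel_ker U Q eta g \<longleftrightarrow>
     (\<forall>X Y. smooth_vf U X \<longrightarrow> smooth_vf U Y \<longrightarrow> (\<forall>p\<in>U. eta p \<bullet> Y p = 0) \<longrightarrow>
        (\<forall>p\<in>U. nablaT g (\<lambda>q. Q q - mat 1) X Y p = 0))"

end

theory Submission
  imports Defs
begin


section \<open>Partial derivatives\<close>

lemma pd_has: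
  assumes "F differentiable (at p)"
  shows "(F has_derivative frechet_derivative F (at p)) (at p)"
  using assms frechet_derivative_works by blast

lemma pd_const[simp]: "pd i (\<lambda>_. c) p = 0"
  by (simp add: pd_def)

lemma pd_mult:
  assumes "F differentiable (at p)" "G differentiable (at p)"
  shows "pd i (\<lambda>q. F q * G q) p = pd i F p * G p + F p * pd i G p"
proof -
  have "((\<lambda>q. F q * G q) has_derivative
     (\<lambda>h. F p * frechet_derivative G (at p) h + frechet_derivative F (at p) h * G p)) (at p)"
    by (rule has_derivative_mult[OF pd_has[OF assms(1)] pd_has[OF assms(2)]])
  note e = frechet_derivative_at[OF this]
  show ?thesis unfolding pd_def e[symmetric] by (simp add: mult.commute)
qed

lemma pd_sum:
  assumes "finite I" "\<And>j. j \<in> I \<Longrightarrow> F j differentiable (at p)"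
  shows "pd i (\<lambda>q. \<Sum>j\<in>I. F j q) p = (\<Sum>j\<in>I. pd i (F j) p)"
proof -
  have "((\<lambda>q. \<Sum>j\<in>I. F j q) has_derivative (\<lambda>h. \<Sum>j\<in>I. frechet_derivative (F j) (at p) h)) (at p)"
    by (rule has_derivative_sum) (use pd_has assms in blast)
  note e = frechet_derivative_at[OF this]
  show ?thesis unfolding pd_def e[symmetric] by simp
qed

lemma pd_add:
  assumes "F differentiable (at p)" "G differentiable (at p)"
  shows "pd i (\<lambda>q. F q + G q) p = pd i F p + pd i G p"
proof -
  have "((\<lambda>q. F q + G q) has_derivative
     (\<lambda>h. frechet_derivative F (at p) h + frechet_derivative G (at p) h)) (at p)"
    by (rule has_derivative_add[OF pd_has[OF assms(1)] pd_has[OF assms(2)]])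
  note e = frechet_derivative_at[OF this]
  show ?thesis unfolding pd_def e[symmetric] by simp
qed

lemma pd_diff:
  assumes "F differentiable (at p)" "G differentiable (at p)"
  shows "pd i (\<lambda>q. F q - G q) p = pd i F p - pd i G p"
proof -
  have "((\<lambda>q. F q - G q) has_derivative
     (\<lambda>h. frechet_derivative F (at p) h - frechet_derivative G (at p) h)) (at p)"
    by (rule has_derivative_diff[OF pd_has[OF assms(1)] pd_has[OF assms(2)]])
  note e = frechet_derivative_at[OF this]
  show ?thesis unfolding pd_def e[symmetric] by simp
qed

lemma pd_cmult:
  assumes "F differentiable (at p)"
  shows "pd i (\<lambda>q. c * F q) p = c * pd i F p"
  using pd_mult[of "\<lambda>_. c" p F i] assms by simp

lemma pd_cong:
  assumes "open U" "p \<in> U" "\<And>q. q \<in> U \<Longrightarrow> F q = G q"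
  shows "pd i F p = pd i G p"
proof -
  have "(F has_derivative D) (at p) \<longleftrightarrow> (G has_derivative D) (at p)" for D
  proof
    assume "(F has_derivative D) (at p)"
    then show "(G has_derivative D) (at p)"
      by (rule has_derivative_transform_within_open[OF _ assms(1,2)]) (simp add: assms(3))
  next
    assume "(G has_derivative D) (at p)"
    then show "(F has_derivative D) (at p)"
      by (rule has_derivative_transform_within_open[OF _ assms(1,2)]) (simp add: assms(3))
  qed
  then have "frechet_derivative F (at p) = frechet_derivative G (at p)"
    unfolding frechet_derivative_def by simp
  then show ?thesis unfolding pd_def by simp
qed

lemma diff_cong:
  assumes "open U" "p \<in> U" "\<And>q. q \<in> U \<Longrightarrow> F q = G q" "F differentiable (at p)"
  shows "G differentiable (at p)"
proof -
  obtain D where "(F has_derivative D) (at p)" using assms(4) unfolding differentiable_def by blast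
  then have "(G has_derivative D) (at p)"
    by (rule has_derivative_transform_within_open[OF _ assms(1,2)]) (simp add: assms(3))
  then show ?thesis unfolding differentiable_def by blast
qed

section \<open>Smoothness closure\<close>

lemma Ck_cong:
  assumes "open U"
  shows "Ck k U F \<Longrightarrow> (\<And>q. q \<in> U \<Longrightarrow> F q = G q) \<Longrightarrow> Ck k U G"
proof (induction k arbitrary: F G)
  case 0
  have "continuous_on U F = continuous_on U G"
    by (rule continuous_on_cong) (use 0 in auto)
  then show ?case using 0 by simp
next
  case (Suc k)
  have d: "\<forall>p\<in>U. G differentiable (at p)"
  proof
    fix p assume "p \<in> U"
    then show "G differentiable (at p)"
      using diff_cong[OF assms, of p F G] Suc.prems by simp
  qed
  have "Ck k U (pd i G)" for i
  proof -
    have "Ck k U (pd i F)" using Suc.prems by auto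
    moreover have "\<And>q. q \<in> U \<Longrightarrow> pd i F q = pd i G q"
      using pd_cong[OF assms] Suc.prems by blast
    ultimately show ?thesis using Suc.IH by blast
  qed
  then show ?case using d by simp
qed

lemma Ck_const: "Ck k U (\<lambda>_. c)"
proof (induction k arbitrary: c)
  case 0
  then show ?case by simp
next
  case (Suc k)
  have e: "pd i (\<lambda>_. c) = (\<lambda>_. 0)" for i by (rule ext) simp
  have "\<forall>i. Ck k U (pd i (\<lambda>_. c))" unfolding e using Suc.IH by blast
  then show ?case by simp
qed

lemma Ck_Suc_diff: "Ck (Suc k) U F \<Longrightarrow> p \<in> U \<Longrightarrow> F differentiable (at p)"
  by simp

lemma Ck_lincomb:
  assumes "open U"
  shows "(\<And>j. Ck k U (F j)) \<Longrightarrow> Ck k U (\<lambda>q. \<Sum>j\<in>(UNIV::'a::finite set). c j * F j q)"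
proof (induction k arbitrary: F)
  case 0
  then show ?case
    by (simp, intro continuous_on_sum continuous_on_mult continuous_on_const) auto
next
  case (Suc k)
  have d: "\<forall>p\<in>U. (\<lambda>q. \<Sum>j\<in>(UNIV::'a set). c j * F j q) differentiable (at p)"
    using Suc.prems by (auto intro!: differentiable_sum differentiable_mult)
  have "Ck k U (pd i (\<lambda>q. \<Sum>j\<in>(UNIV::'a set). c j * F j q))" for i
  proof -
    have "Ck k U (\<lambda>q. \<Sum>j\<in>(UNIV::'a set). c j * pd i (F j) q)"
      using Suc.IH[of "\<lambda>j. pd i (F j)"] Suc.prems by simp
    moreover have "\<And>q. q \<in> U \<Longrightarrow> (\<Sum>j\<in>(UNIV::'a set). c j * pd i (F j) q)
        = pd i (\<lambda>q. \<Sum>j\<in>(UNIV::'a set). c j * F j q) q"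
      using Suc.prems by (subst pd_sum) (auto intro!: differentiable_mult simp: pd_cmult)
    ultimately show ?thesis using Ck_cong[OF assms] by blast
  qed
  then show ?case using d by simp
qed

lemma smooth_const_vf: "smooth_vf U (\<lambda>_. v)"
  unfolding smooth_vf_def smooth_fun_def using Ck_const by blast

lemma smooth_f_vec:
  assumes "open U" "smooth_tf U f"
  shows "smooth_vf U (\<lambda>q. f q *v v)"
  unfolding smooth_vf_def smooth_fun_def
proof (intro allI)
  fix i k
  have "Ck k U (\<lambda>q. \<Sum>j\<in>UNIV. v $ j * f q $ i $ j)"
    using Ck_lincomb[OF assms(1), of k "\<lambda>j q. f q $ i $ j" "\<lambda>j. v $ j"] assms(2)
    unfolding smooth_tf_def smooth_fun_def by blast
  then show "Ck k U (\<lambda>p. (f p *v v) $ i)"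
    by (simp add: matrix_vector_mult_def mult.commute)
qed

lemma smooth_fun_diff: "smooth_fun U F \<Longrightarrow> p \<in> U \<Longrightarrow> F differentiable (at p)"
  unfolding smooth_fun_def by (metis Ck_Suc_diff)



definition dd :: "real^'m::finite \<Rightarrow> (real^'m \<Rightarrow> real) \<Rightarrow> real^'m \<Rightarrow> real" where
  "dd u F p = (\<Sum>i\<in>UNIV. u$i * pd i F p)"

definition DV :: "(real^'m::finite \<Rightarrow> real^'m) \<Rightarrow> real^'m \<Rightarrow> real^'m \<Rightarrow> real^'m" where
  "DV Y u p = (\<chi> k. dd u (\<lambda>q. Y q $ k) p)"

definition DM :: "(real^'m::finite \<Rightarrow> real^'m^'m) \<Rightarrow> real^'m \<Rightarrow> real^'m \<Rightarrow> real^'m^'m" where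
  "DM T u p = (\<chi> a b. dd u (\<lambda>q. T q $ a $ b) p)"

definition GM :: "(real^'m::finite \<Rightarrow> real^'m^'m) \<Rightarrow> real^'m \<Rightarrow> real^'m \<Rightarrow> real^'m^'m" where
  "GM g u p = (\<chi> k j. \<Sum>i\<in>UNIV. u$i * christoffel g k i j p)"

definition covT :: "(real^'m::finite \<Rightarrow> real^'m^'m) \<Rightarrow> (real^'m \<Rightarrow> real^'m^'m) \<Rightarrow> real^'m \<Rightarrow> real^'m \<Rightarrow> real^'m^'m" where
  "covT g T u p = DM T u p + GM g u p ** T p - T p ** GM g u p"

definition vd :: "(real^'m::finite \<Rightarrow> real^'m) \<Rightarrow> real^'m \<Rightarrow> bool" where
  "vd Y p \<longleftrightarrow> (\<forall>k. (\<lambda>q. Y q $ k) differentiable (at p))"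

definition md :: "(real^'m::finite \<Rightarrow> real^'m^'m) \<Rightarrow> real^'m \<Rightarrow> bool" where
  "md T p \<longleftrightarrow> (\<forall>a b. (\<lambda>q. T q $ a $ b) differentiable (at p))"

lemma dir_dd: "dir X F p = dd (X p) F p"
  by (simp add: dir_def dd_def)

lemma dd_const[simp]: "dd u (\<lambda>_. c) p = 0"
  by (simp add: dd_def)

lemma dd_mult:
  assumes "F differentiable (at p)" "G differentiable (at p)"
  shows "dd u (\<lambda>q. F q * G q) p = dd u F p * G p + F p * dd u G p"
  by (simp add: dd_def pd_mult[OF assms] algebra_simps sum.distrib sum_distrib_right sum_distrib_left)

lemma dd_add:
  assumes "F differentiable (at p)" "G differentiable (at p)"
  shows "dd u (\<lambda>q. F q + G q) p = dd u F p + dd u G p"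
  by (simp add: dd_def pd_add[OF assms] algebra_simps sum.distrib)

lemma dd_diff:
  assumes "F differentiable (at p)" "G differentiable (at p)"
  shows "dd u (\<lambda>q. F q - G q) p = dd u F p - dd u G p"
  by (simp add: dd_def pd_diff[OF assms] algebra_simps sum_subtractf)

lemma dd_sum:
  assumes "finite I" "\<And>j. j \<in> I \<Longrightarrow> F j differentiable (at p)"
  shows "dd u (\<lambda>q. \<Sum>j\<in>I. F j q) p = (\<Sum>j\<in>I. dd u (F j) p)"
proof -
  have "pd i (\<lambda>q. \<Sum>j\<in>I. F j q) p = (\<Sum>j\<in>I. pd i (F j) p)" for i
    by (rule pd_sum[OF assms])
  then have "dd u (\<lambda>q. \<Sum>j\<in>I. F j q) p = (\<Sum>i\<in>UNIV. \<Sum>j\<in>I. u$i * pd i (F j) p)"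
    unfolding dd_def by (simp add: sum_distrib_left)
  also have "\<dots> = (\<Sum>j\<in>I. \<Sum>i\<in>UNIV. u$i * pd i (F j) p)"
    by (rule sum.swap)
  finally show ?thesis unfolding dd_def .
qed

lemma dd_cong:
  assumes "open U" "p \<in> U" "\<And>q. q \<in> U \<Longrightarrow> F q = G q"
  shows "dd u F p = dd u G p"
proof -
  have "pd i F p = pd i G p" for i by (rule pd_cong[OF assms])
  then show ?thesis by (simp add: dd_def)
qed

lemma nabla_eq: "nabla g X Y p = DV Y (X p) p + GM g (X p) p *v Y p"
proof -
  have "(\<Sum>j\<in>UNIV. (\<Sum>i\<in>UNIV. X p $ i * christoffel g k i j p) * Y p $ j)
     = (\<Sum>i\<in>UNIV. \<Sum>j\<in>UNIV. christoffel g k i j p * X p $ i * Y p $ j)" for k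
    unfolding sum_distrib_right by (subst sum.swap) (simp add: mult_ac)
  then show ?thesis
    unfolding nabla_def DV_def GM_def matrix_vector_mult_def
    by (simp add: vec_eq_iff dir_dd)
qed

lemma DV_cong:
  assumes "open U" "p \<in> U" "\<And>q. q \<in> U \<Longrightarrow> Y q = Z q"
  shows "DV Y u p = DV Z u p"
proof -
  have "dd u (\<lambda>q. Y q $ k) p = dd u (\<lambda>q. Z q $ k) p" for k
    by (rule dd_cong[OF assms(1,2)]) (simp add: assms(3))
  then show ?thesis unfolding DV_def by simp
qed

lemma DM_cong:
  assumes "open U" "p \<in> U" "\<And>q. q \<in> U \<Longrightarrow> Y q = Z q"
  shows "DM Y u p = DM Z u p"
proof -
  have "dd u (\<lambda>q. Y q $ a $ b) p = dd u (\<lambda>q. Z q $ a $ b) p" for a b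
    by (rule dd_cong[OF assms(1,2)]) (simp add: assms(3))
  then show ?thesis unfolding DM_def by simp
qed

lemma DV_const[simp]: "DV (\<lambda>_. v) u p = 0"
  by (simp add: DV_def vec_eq_iff)

lemma DM_const[simp]: "DM (\<lambda>_. v) u p = 0"
  by (simp add: DM_def vec_eq_iff)

lemma vd_const[simp]: "vd (\<lambda>_. v) p"
  by (simp add: vd_def)

lemma md_const[simp]: "md (\<lambda>_. v) p"
  by (simp add: md_def)

lemma DV_Mv:
  assumes "md T p" "vd Y p"
  shows "DV (\<lambda>q. T q *v Y q) u p = DM T u p *v Y p + T p *v DV Y u p"
proof -
  have "dd u (\<lambda>q. \<Sum>j\<in>UNIV. T q $ k $ j * Y q $ j) p
      = (\<Sum>j\<in>UNIV. dd u (\<lambda>q. T q $ k $ j) p * Y p $ j + T p $ k $ j * dd u (\<lambda>q. Y q $ j) p)" for k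
    using assms unfolding md_def vd_def
    by (subst dd_sum) (auto intro!: differentiable_mult simp: dd_mult)
  then show ?thesis
    unfolding DV_def DM_def matrix_vector_mult_def
    by (simp add: vec_eq_iff sum.distrib)
qed

lemma vd_Mv:
  assumes "md T p" "vd Y p"
  shows "vd (\<lambda>q. T q *v Y q) p"
  using assms unfolding md_def vd_def matrix_vector_mult_def
  by (auto intro!: differentiable_sum differentiable_mult)

lemma DM_mm:
  assumes "md A p" "md B p"
  shows "DM (\<lambda>q. A q ** B q) u p = DM A u p ** B p + A p ** DM B u p"
proof -
  have "dd u (\<lambda>q. \<Sum>k\<in>UNIV. A q $ a $ k * B q $ k $ b) p
      = (\<Sum>k\<in>UNIV. dd u (\<lambda>q. A q $ a $ k) p * B p $ k $ b + A p $ a $ k * dd u (\<lambda>q. B q $ k $ b) p)" for a b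
    using assms unfolding md_def
    by (subst dd_sum) (auto intro!: differentiable_mult simp: dd_mult)
  then show ?thesis
    unfolding DM_def matrix_matrix_mult_def
    by (simp add: vec_eq_iff sum.distrib)
qed

lemma md_mm:
  assumes "md A p" "md B p"
  shows "md (\<lambda>q. A q ** B q) p"
  using assms unfolding md_def matrix_matrix_mult_def
  by (auto intro!: differentiable_sum differentiable_mult)

lemma DM_diff:
  assumes "md A p" "md B p"
  shows "DM (\<lambda>q. A q - B q) u p = DM A u p - DM B u p"
  using assms unfolding md_def DM_def by (simp add: vec_eq_iff dd_diff)

lemma DM_add:
  assumes "md A p" "md B p"
  shows "DM (\<lambda>q. A q + B q) u p = DM A u p + DM B u p"
  using assms unfolding md_def DM_def by (simp add: vec_eq_iff dd_add)

lemma md_diff: "md A p \<Longrightarrow> md B p \<Longrightarrow> md (\<lambda>q. A q - B q) p"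
  unfolding md_def by (auto intro!: differentiable_diff)

lemma md_add: "md A p \<Longrightarrow> md B p \<Longrightarrow> md (\<lambda>q. A q + B q) p"
  unfolding md_def by (auto intro!: differentiable_add)

lemma DV_add:
  assumes "vd A p" "vd B p"
  shows "DV (\<lambda>q. A q + B q) u p = DV A u p + DV B u p"
  using assms unfolding vd_def DV_def by (simp add: vec_eq_iff dd_add)

lemma DV_diff:
  assumes "vd A p" "vd B p"
  shows "DV (\<lambda>q. A q - B q) u p = DV A u p - DV B u p"
  using assms unfolding vd_def DV_def by (simp add: vec_eq_iff dd_diff)

lemma vd_add: "vd A p \<Longrightarrow> vd B p \<Longrightarrow> vd (\<lambda>q. A q + B q) p"
  unfolding vd_def by (auto intro!: differentiable_add)

lemma vd_diff: "vd A p \<Longrightarrow> vd B p \<Longrightarrow> vd (\<lambda>q. A q - B q) p"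
  unfolding vd_def by (auto intro!: differentiable_diff)

lemma dd_dot:
  assumes "vd Y p" "vd Z p"
  shows "dd u (\<lambda>q. Y q \<bullet> Z q) p = DV Y u p \<bullet> Z p + Y p \<bullet> DV Z u p"
proof -
  have "dd u (\<lambda>q. \<Sum>k\<in>UNIV. Y q $ k * Z q $ k) p
      = (\<Sum>k\<in>UNIV. dd u (\<lambda>q. Y q $ k) p * Z p $ k + Y p $ k * dd u (\<lambda>q. Z q $ k) p)"
    using assms unfolding vd_def
    by (subst dd_sum) (auto intro!: differentiable_mult simp: dd_mult)
  then show ?thesis
    unfolding DV_def inner_vec_def
    by (simp add: sum.distrib)
qed

lemma DM_eta_xi:
  assumes "vd e p" "vd x p"
  shows "DM (\<lambda>q. eta_xi (e q) (x q)) u p = eta_xi (DV e u p) (x p) + eta_xi (e p) (DV x u p)"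
  using assms unfolding vd_def DM_def DV_def eta_xi_def
  by (simp add: vec_eq_iff dd_mult algebra_simps)

lemma md_eta_xi: "vd e p \<Longrightarrow> vd x p \<Longrightarrow> md (\<lambda>q. eta_xi (e q) (x q)) p"
  unfolding vd_def md_def eta_xi_def by (auto intro!: differentiable_mult)

lemma nablaT_eq:
  assumes "md T p" "vd Y p"
  shows "nablaT g T X Y p = covT g T (X p) p *v Y p"
  unfolding nablaT_def nabla_eq covT_def DV_Mv[OF assms]
  by (simp add: algebra_simps matrix_vector_mul_assoc)

lemma nabla_zero:
  assumes "open U" "p \<in> U" "\<And>q. q \<in> U \<Longrightarrow> Y q = 0"
  shows "nabla g X Y p = 0"
proof -
  have "DV Y (X p) p = DV (\<lambda>_. 0) (X p) p" by (rule DV_cong[OF assms(1,2)]) (simp add: assms(3))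
  then show ?thesis unfolding nabla_eq using assms(2,3) by simp
qed

lemma vd_smooth: "smooth_vf U Y \<Longrightarrow> p \<in> U \<Longrightarrow> vd Y p"
  unfolding smooth_vf_def vd_def using smooth_fun_diff by blast

lemma md_smooth: "smooth_tf U T \<Longrightarrow> p \<in> U \<Longrightarrow> md T p"
  unfolding smooth_tf_def md_def using smooth_fun_diff by blast



lemma sum_swap_helper:
  fixes u :: "'i::finite \<Rightarrow> real"
  shows "(\<Sum>k\<in>(UNIV::'k::finite set). (\<Sum>i\<in>(UNIV::'i::finite set). u i * c k i) * d k)
       = (\<Sum>i\<in>UNIV. u i * (\<Sum>k\<in>UNIV. d k * c k i))"
proof -
  have "(\<Sum>k\<in>(UNIV::'k set). (\<Sum>i\<in>(UNIV::'i set). u i * c k i) * d k)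
      = (\<Sum>k\<in>(UNIV::'k set). \<Sum>i\<in>(UNIV::'i set). u i * (d k * c k i))"
    by (simp add: sum_distrib_right sum_distrib_left mult_ac)
  also have "\<dots> = (\<Sum>i\<in>(UNIV::'i set). \<Sum>k\<in>(UNIV::'k set). u i * (d k * c k i))"
    by (rule sum.swap)
  also have "\<dots> = (\<Sum>i\<in>UNIV. u i * (\<Sum>k\<in>UNIV. d k * c k i))"
    by (simp add: sum_distrib_left)
  finally show ?thesis .
qed

lemma sum_swap_helper2:
  fixes u :: "'i::finite \<Rightarrow> real"
  shows "(\<Sum>k\<in>(UNIV::'k::finite set). d k * (\<Sum>i\<in>(UNIV::'i::finite set). u i * c k i))
       = (\<Sum>i\<in>UNIV. u i * (\<Sum>k\<in>UNIV. d k * c k i))"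
  using sum_swap_helper[of u c d] by (simp add: mult.commute)

lemma riem_sym: "riemannian U g \<Longrightarrow> p \<in> U \<Longrightarrow> g p $ a $ b = g p $ b $ a"
proof -
  assume "riemannian U g" "p \<in> U"
  then have "transpose (g p) = g p" unfolding riemannian_def by blast
  then have "g p $ b $ a = transpose (g p) $ b $ a" by simp
  also have "\<dots> = g p $ a $ b" by (simp add: transpose_def)
  finally show ?thesis by simp
qed

lemma riem_pos: "riemannian U g \<Longrightarrow> p \<in> U \<Longrightarrow> v \<noteq> 0 \<Longrightarrow> v \<bullet> (g p *v v) > 0"
  unfolding riemannian_def by blast

lemma riem_inv:
  assumes "riemannian U g" "p \<in> U"
  shows "g p ** matrix_inv (g p) = mat 1"
proof -
  have "g p *v v = 0 \<Longrightarrow> v = 0" for v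
    using riem_pos[OF assms, of v] by force
  then have "\<exists>B. B ** g p = mat 1" using matrix_left_invertible_ker by blast
  then have "invertible (g p)" using invertible_left_inverse by blast
  then have "\<exists>A'. g p ** A' = mat 1 \<and> A' ** g p = mat 1" unfolding invertible_def .
  then show ?thesis unfolding matrix_inv_def by (rule someI_ex[THEN conjunct1])
qed

lemma riem_pd_sym:
  assumes "riemannian U g" "p \<in> U" "open U"
  shows "pd i (\<lambda>q. g q $ a $ b) p = pd i (\<lambda>q. g q $ b $ a) p"
  by (rule pd_cong[OF assms(3,2)]) (rule riem_sym[OF assms(1)])

lemma christoffel_low:
  assumes "riemannian U g" "p \<in> U"
  shows "(\<Sum>k\<in>UNIV. g p $ l $ k * christoffel g k i j p)
    = (1/2) * (pd i (\<lambda>q. g q $ j $ l) p + pd j (\<lambda>q. g q $ i $ l) p - pd l (\<lambda>q. g q $ i $ j) p)"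
proof -
  define c where "c m = pd i (\<lambda>q. g q $ j $ m) p + pd j (\<lambda>q. g q $ i $ m) p - pd m (\<lambda>q. g q $ i $ j) p" for m
  have "(\<Sum>k\<in>UNIV. g p $ l $ k * christoffel g k i j p)
      = (1/2) * (\<Sum>k\<in>UNIV. \<Sum>m\<in>UNIV. g p $ l $ k * (matrix_inv (g p) $ k $ m * c m))"
    unfolding christoffel_def c_def by (simp add: sum_distrib_left mult_ac)
  also have "\<dots> = (1/2) * (\<Sum>m\<in>UNIV. \<Sum>k\<in>UNIV. g p $ l $ k * (matrix_inv (g p) $ k $ m * c m))"
    by (subst sum.swap) rule
  also have "\<dots> = (1/2) * (\<Sum>m\<in>UNIV. (g p ** matrix_inv (g p)) $ l $ m * c m)"
    by (simp add: matrix_matrix_mult_def sum_distrib_right sum_distrib_left mult_ac)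
  also have "\<dots> = (1/2) * c l"
    unfolding riem_inv[OF assms] by (simp add: mat_def if_distrib[of "\<lambda>z. z * _"] cong: if_cong)
  finally show ?thesis unfolding c_def .
qed

lemma christoffel_sym:
  assumes "riemannian U g" "p \<in> U" "open U"
  shows "christoffel g k i j p = christoffel g k j i p"
  unfolding christoffel_def using riem_pd_sym[OF assms] by (simp add: algebra_simps)

lemma GM_sym:
  assumes "riemannian U g" "p \<in> U" "open U"
  shows "GM g u p *v v = GM g v p *v u"
proof -
  have "(\<Sum>j\<in>UNIV. (\<Sum>i\<in>UNIV. u $ i * christoffel g k i j p) * v $ j)
      = (\<Sum>j\<in>UNIV. (\<Sum>i\<in>UNIV. v $ i * christoffel g k i j p) * u $ j)" for k
  proof -
    have "(\<Sum>j\<in>UNIV. (\<Sum>i\<in>UNIV. u $ i * christoffel g k i j p) * v $ j)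
        = (\<Sum>j\<in>UNIV. \<Sum>i\<in>UNIV. u $ i * v $ j * christoffel g k i j p)"
      by (simp add: sum_distrib_right sum_distrib_left mult_ac)
    also have "\<dots> = (\<Sum>i\<in>UNIV. \<Sum>j\<in>UNIV. u $ i * v $ j * christoffel g k i j p)"
      by (rule sum.swap)
    also have "\<dots> = (\<Sum>i\<in>UNIV. \<Sum>j\<in>UNIV. v $ j * u $ i * christoffel g k j i p)"
      using christoffel_sym[OF assms] by (simp add: mult_ac)
    also have "\<dots> = (\<Sum>i\<in>UNIV. (\<Sum>j\<in>UNIV. v $ j * christoffel g k j i p) * u $ i)"
      by (simp add: sum_distrib_right sum_distrib_left mult_ac)
    finally show ?thesis .
  qed
  then show ?thesis unfolding GM_def matrix_vector_mult_def by (simp add: vec_eq_iff)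
qed

lemma metric_compat:
  assumes "riemannian U g" "p \<in> U" "open U"
  shows "DM g u p = transpose (GM g u p) ** g p + g p ** GM g u p"
proof -
  have "dd u (\<lambda>q. g q $ a $ b) p
     = (\<Sum>k\<in>UNIV. (\<Sum>i\<in>UNIV. u $ i * christoffel g k i a p) * g p $ k $ b)
     + (\<Sum>k\<in>UNIV. g p $ a $ k * (\<Sum>i\<in>UNIV. u $ i * christoffel g k i b p))" for a b
  proof -
    have "(\<Sum>k\<in>UNIV. (\<Sum>i\<in>UNIV. u $ i * christoffel g k i a p) * g p $ k $ b)
       = (\<Sum>i\<in>UNIV. u $ i * (\<Sum>k\<in>UNIV. g p $ k $ b * christoffel g k i a p))"
      by (rule sum_swap_helper)
    also have "\<dots> = (\<Sum>i\<in>UNIV. u $ i * (\<Sum>k\<in>UNIV. g p $ b $ k * christoffel g k i a p))"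
      using riem_sym[OF assms(1,2)] by simp
    also have "\<dots> = (\<Sum>i\<in>UNIV. u $ i * ((1/2) * (pd i (\<lambda>q. g q $ a $ b) p + pd a (\<lambda>q. g q $ i $ b) p - pd b (\<lambda>q. g q $ i $ a) p)))"
      by (simp add: christoffel_low[OF assms(1,2)])
    finally have 1: "(\<Sum>k\<in>UNIV. (\<Sum>i\<in>UNIV. u $ i * christoffel g k i a p) * g p $ k $ b)
       = (\<Sum>i\<in>UNIV. u $ i * ((1/2) * (pd i (\<lambda>q. g q $ a $ b) p + pd a (\<lambda>q. g q $ i $ b) p - pd b (\<lambda>q. g q $ i $ a) p)))" .
    have "(\<Sum>k\<in>UNIV. g p $ a $ k * (\<Sum>i\<in>UNIV. u $ i * christoffel g k i b p))
       = (\<Sum>i\<in>UNIV. u $ i * (\<Sum>k\<in>UNIV. g p $ a $ k * christoffel g k i b p))"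
      by (rule sum_swap_helper2)
    also have "\<dots> = (\<Sum>i\<in>UNIV. u $ i * ((1/2) * (pd i (\<lambda>q. g q $ b $ a) p + pd b (\<lambda>q. g q $ i $ a) p - pd a (\<lambda>q. g q $ i $ b) p)))"
      by (simp add: christoffel_low[OF assms(1,2)])
    finally have 2: "(\<Sum>k\<in>UNIV. g p $ a $ k * (\<Sum>i\<in>UNIV. u $ i * christoffel g k i b p))
       = (\<Sum>i\<in>UNIV. u $ i * ((1/2) * (pd i (\<lambda>q. g q $ b $ a) p + pd b (\<lambda>q. g q $ i $ a) p - pd a (\<lambda>q. g q $ i $ b) p)))" .
    have 3: "pd i (\<lambda>q. g q $ b $ a) p = pd i (\<lambda>q. g q $ a $ b) p" for i
      by (rule riem_pd_sym[OF assms])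
    show ?thesis unfolding 1 2 3 dd_def
      by (simp add: sum.distrib[symmetric] algebra_simps)
  qed
  then show ?thesis
    unfolding DM_def GM_def by (simp add: vec_eq_iff matrix_matrix_mult_def transpose_def)
qed



lemma mv_neg: "(- A) *v v = - (A *v (v::real^'n))" for A :: "real^'n^'m"
  by (simp add: matrix_vector_mult_def vec_eq_iff sum_negf)

lemma mv_scaleR: "A *v (c *\<^sub>R v) = c *\<^sub>R (A *v (v::real^'n))" for A :: "real^'n^'m"
  by (rule matrix_vector_mult_scaleR)

lemma eta_xi_mv: "eta_xi e x *v v = (e \<bullet> v) *\<^sub>R x"
  by (simp add: eta_xi_def matrix_vector_mult_def vec_eq_iff inner_vec_def sum_distrib_left mult_ac)

lemma dot_G_sym:
  assumes "transpose G = G"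
  shows "u \<bullet> (G *v v) = v \<bullet> (G *v (u::real^'n))"
proof -
  have "u \<bullet> (G *v v) = (u v* G) \<bullet> v" by (simp add: dot_lmul_matrix)
  also have "\<dots> = (transpose G *v u) \<bullet> v" by simp
  also have "\<dots> = v \<bullet> (G *v u)" using assms by (simp add: inner_commute)
  finally show ?thesis .
qed

locale acmpt =
  fixes G F Q :: "real^'m::finite^'m" and x e :: "real^'m"
  assumes symG: "transpose G = G"
  and posG: "\<And>v. v \<noteq> 0 \<Longrightarrow> v \<bullet> (G *v v) > 0"
  and ff: "F ** F = - Q + eta_xi e x"
  and ex: "e \<bullet> x = 1" and Qx: "Q *v x = x" and invQ: "invertible Q"
  and kerinv: "\<And>v. e \<bullet> v = 0 \<Longrightarrow> e \<bullet> (F *v v) = 0"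
  and comp: "\<And>u v. (F *v u) \<bullet> (G *v (F *v v)) = u \<bullet> (G *v (Q *v v)) - (e \<bullet> u) * (e \<bullet> v)"
begin

lemma gsym: "u \<bullet> (G *v v) = v \<bullet> (G *v u)"
  by (rule dot_G_sym[OF symG])

lemma FF: "F *v (F *v v) = (e \<bullet> v) *\<^sub>R x - Q *v v"
  by (simp add: matrix_vector_mul_assoc ff algebra_simps mv_neg eta_xi_mv)

lemma Qinj: "Q *v a = Q *v b \<Longrightarrow> a = b"
  using inj_matrix_vector_mult[OF invQ] unfolding inj_def by blast

lemma Qsurj: "Q *v (matrix_inv Q *v v) = v"
proof -
  have "\<exists>A'. Q ** A' = mat 1 \<and> A' ** Q = mat 1" using invQ unfolding invertible_def .
  then have "Q ** matrix_inv Q = mat 1" unfolding matrix_inv_def by (rule someI_ex[THEN conjunct1])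
  then show ?thesis by (simp add: matrix_vector_mul_assoc)
qed

lemma kerF: assumes "F *v w = 0" shows "w = (e \<bullet> w) *\<^sub>R x"
proof -
  have "F *v (F *v w) = 0" using assms by simp
  then have "Q *v w = (e \<bullet> w) *\<^sub>R x" using FF[of w] by simp
  also have "\<dots> = Q *v ((e \<bullet> w) *\<^sub>R x)" by (simp add: mv_scaleR Qx)
  finally show ?thesis by (rule Qinj)
qed

lemma Fx: "F *v x = 0"
proof -
  define w where "w = F *v x"
  have Fw: "F *v w = 0" using FF[of x] unfolding w_def by (simp add: ex Qx)
  then have w: "w = (e \<bullet> w) *\<^sub>R x" by (rule kerF)
  then have "F *v w = (e \<bullet> w) *\<^sub>R w" unfolding w_def by (metis mv_scaleR)
  then have "(e \<bullet> w) *\<^sub>R w = 0" using Fw by simp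
  then have "e \<bullet> w = 0 \<or> w = 0" by simp
  then show ?thesis using w unfolding w_def by auto
qed

lemma Gx: "G *v x = e"
proof -
  have "u \<bullet> (G *v x) = u \<bullet> e" for u
    using comp[of u x] by (simp add: Fx Qx ex inner_commute)
  then have h: "(G *v x - e) \<bullet> (G *v x) = (G *v x - e) \<bullet> e" by blast
  then have "(G *v x - e) \<bullet> (G *v x - e) = 0"
    by (simp add: inner_diff_right)
  then show ?thesis by simp
qed

lemma gx: "u \<bullet> (G *v x) = e \<bullet> u"
  by (simp add: Gx inner_commute)

lemma xg: "x \<bullet> (G *v u) = e \<bullet> u"
  using gx gsym by metis

lemma eF: "e \<bullet> (F *v v) = 0"
proof -
  have "e \<bullet> (v - (e \<bullet> v) *\<^sub>R x) = 0" by (simp add: inner_diff_right ex)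
  then have "e \<bullet> (F *v (v - (e \<bullet> v) *\<^sub>R x)) = 0" by (rule kerinv)
  then show ?thesis by (simp add: algebra_simps Fx)
qed

lemma Qsym: "u \<bullet> (G *v (Q *v v)) = (Q *v u) \<bullet> (G *v v)"
proof -
  have "u \<bullet> (G *v (Q *v v)) = (F *v u) \<bullet> (G *v (F *v v)) + (e \<bullet> u) * (e \<bullet> v)"
    using comp[of u v] by simp
  also have "\<dots> = (F *v v) \<bullet> (G *v (F *v u)) + (e \<bullet> v) * (e \<bullet> u)"
    using gsym by simp
  also have "\<dots> = v \<bullet> (G *v (Q *v u))" using comp[of v u] by simp
  also have "\<dots> = (Q *v u) \<bullet> (G *v v)" using gsym by simp
  finally show ?thesis .
qed

lemma FQ: "F *v (Q *v v) = Q *v (F *v v)"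
proof -
  have "Q *v v = (e \<bullet> v) *\<^sub>R x - F *v (F *v v)" using FF[of v] by simp
  then have "F *v (Q *v v) = F *v ((e \<bullet> v) *\<^sub>R x) - F *v (F *v (F *v v))"
    by (simp add: matrix_vector_mult_diff_distrib)
  then have 1: "F *v (Q *v v) = - (F *v (F *v (F *v v)))"
    by (simp add: mv_scaleR Fx)
  have "Q *v (F *v v) = (e \<bullet> (F *v v)) *\<^sub>R x - F *v (F *v (F *v v))" using FF[of "F *v v"] by simp
  then have 2: "Q *v (F *v v) = - (F *v (F *v (F *v v)))" by (simp add: eF)
  show ?thesis using 1 2 by simp
qed

lemma Fskew0: "u \<bullet> (G *v (F *v (Q *v v))) = - ((F *v u) \<bullet> (G *v (Q *v v)))"
proof -
  have "(F *v u) \<bullet> (G *v (F *v (F *v v))) = u \<bullet> (G *v (Q *v (F *v v)))"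
    using comp[of u "F *v v"] by (simp add: eF)
  moreover have "(F *v u) \<bullet> (G *v (F *v (F *v v))) = - ((F *v u) \<bullet> (G *v (Q *v v)))"
    unfolding FF by (simp add: algebra_simps inner_diff_right gx eF)
  ultimately show ?thesis by (simp add: FQ)
qed

lemma Fskew: "(F *v u) \<bullet> (G *v v) = - (u \<bullet> (G *v (F *v v)))"
  using Fskew0[of u "matrix_inv Q *v v"] by (simp add: Qsurj)

lemma nondeg: assumes "\<And>v. a \<bullet> (G *v v) = b \<bullet> (G *v v)" shows "a = b"
proof (rule ccontr)
  assume "a \<noteq> b"
  then have "(a - b) \<bullet> (G *v (a - b)) > 0" using posG[of "a - b"] by simp
  moreover have "(a - b) \<bullet> (G *v (a - b)) = 0" using assms[of "a - b"] by (simp add: inner_diff_left)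
  ultimately show False by simp
qed

lemma eQ: "e \<bullet> (Q *v v) = e \<bullet> v"
  using Qsym[of x v] xg[of "Q *v v"] xg[of v] by (simp add: Qx)

lemma gxx: "x \<bullet> (G *v x) = 1"
  by (simp add: xg ex)

end



definition nab :: "(real^'m::finite \<Rightarrow> real^'m^'m) \<Rightarrow> real^'m \<Rightarrow> (real^'m \<Rightarrow> real^'m) \<Rightarrow> real^'m \<Rightarrow> real^'m" where
  "nab g u Y p = DV Y u p + GM g u p *v Y p"

lemma nabla_nab: "nabla g X Y p = nab g (X p) Y p"
  by (simp add: nabla_eq nab_def)

lemma nab_add: "vd Y p \<Longrightarrow> vd Z p \<Longrightarrow> nab g u (\<lambda>q. Y q + Z q) p = nab g u Y p + nab g u Z p"
  by (simp add: nab_def DV_add algebra_simps)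

lemma nab_diff: "vd Y p \<Longrightarrow> vd Z p \<Longrightarrow> nab g u (\<lambda>q. Y q - Z q) p = nab g u Y p - nab g u Z p"
  by (simp add: nab_def DV_diff algebra_simps)

lemma nab_const: "nab g u (\<lambda>_. v) p = GM g u p *v v"
  by (simp add: nab_def)

lemma nab_Mv:
  assumes "md T p" "vd Y p"
  shows "nab g u (\<lambda>q. T q *v Y q) p = covT g T u p *v Y p + T p *v nab g u Y p"
  unfolding nab_def covT_def DV_Mv[OF assms]
  by (simp add: algebra_simps matrix_vector_mul_assoc)

lemma DV_scale:
  assumes "s differentiable (at p)" "vd Y p"
  shows "DV (\<lambda>q. s q *\<^sub>R Y q) u p = dd u s p *\<^sub>R Y p + s p *\<^sub>R DV Y u p"
  using assms unfolding DV_def vd_def by (simp add: vec_eq_iff dd_mult)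

lemma vd_scale: "s differentiable (at p) \<Longrightarrow> vd Y p \<Longrightarrow> vd (\<lambda>q. s q *\<^sub>R Y q) p"
  unfolding vd_def by (auto intro!: differentiable_mult)

lemma nab_scale:
  assumes "s differentiable (at p)" "vd Y p"
  shows "nab g u (\<lambda>q. s q *\<^sub>R Y q) p = dd u s p *\<^sub>R Y p + s p *\<^sub>R nab g u Y p"
  unfolding nab_def DV_scale[OF assms] by (simp add: algebra_simps mv_scaleR)

lemma nab_cong:
  assumes "open U" "p \<in> U" "\<And>q. q \<in> U \<Longrightarrow> Y q = Z q"
  shows "nab g u Y p = nab g u Z p"
  unfolding nab_def using DV_cong[OF assms] assms(2,3) by simp

lemma nab_zero:
  assumes "open U" "p \<in> U" "\<And>q. q \<in> U \<Longrightarrow> Y q = 0"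
  shows "nab g u Y p = 0"
  using nab_cong[OF assms(1,2), of Y "\<lambda>_. 0"] assms(3) by (simp add: nab_const)

lemma transpose_move: "a \<bullet> (transpose M *v b) = (M *v a) \<bullet> (b::real^'n)" for M :: "real^'n^'n"
  by (simp add: dot_lmul_matrix[symmetric] inner_commute)

lemma vmove: "a \<bullet> (b v* M) = (M *v a) \<bullet> (b::real^'n)" for M :: "real^'n^'n"
  by (metis dot_lmul_matrix inner_commute)

lemma dot_diff_at:
  assumes "vd Y p" "vd Z p"
  shows "(\<lambda>q. Y q \<bullet> Z q) differentiable (at p)"
  using assms unfolding vd_def inner_vec_def by (auto intro!: differentiable_sum differentiable_mult)

lemma MC:
  assumes "riemannian U g" "p \<in> U" "open U" "md g p" "vd Y p" "vd Z p"
  shows "dd u (\<lambda>q. Y q \<bullet> (g q *v Z q)) p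
     = nab g u Y p \<bullet> (g p *v Z p) + Y p \<bullet> (g p *v nab g u Z p)"
proof -
  have "dd u (\<lambda>q. Y q \<bullet> (g q *v Z q)) p = DV Y u p \<bullet> (g p *v Z p) + Y p \<bullet> DV (\<lambda>q. g q *v Z q) u p"
    by (rule dd_dot[OF assms(5) vd_Mv[OF assms(4,6)]])
  also have "DV (\<lambda>q. g q *v Z q) u p = DM g u p *v Z p + g p *v DV Z u p"
    by (rule DV_Mv[OF assms(4,6)])
  also have "DM g u p = transpose (GM g u p) ** g p + g p ** GM g u p"
    by (rule metric_compat[OF assms(1-3)])
  finally show ?thesis
    unfolding nab_def
    by (simp add: algebra_simps matrix_vector_mul_assoc[symmetric] inner_add_left inner_add_right vmove)
qed



lemma acm_at:
  assumes "weak_acm U f Q xi eta g" "q \<in> U"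
  shows "acmpt (g q) (f q) (Q q) (xi q) (eta q)"
  using assms unfolding weak_acm_def riemannian_def gv_def acmpt_def by blast

lemma abel5:
  fixes a b c d h r1 r2 r3 :: "'a::ab_group_add"
  assumes "a + (b + (c + (d + h))) = r1 + (r2 + r3)" "b + h = r2"
  shows "a + (c + d) = r1 + r3"
proof -
  have "a + (c + d) = (a + (b + (c + (d + h)))) - (b + h)" by (simp add: algebra_simps)
  also have "\<dots> = r1 + r3" using assms by (simp add: algebra_simps)
  finally show ?thesis .
qed

locale wp =
  fixes U :: "(real^'m::finite) set" and f Q xi eta g p
  assumes W: "weak_acm U f Q xi eta g" and pU: "p \<in> U"
begin

interpretation P: acmpt "g p" "f p" "Q p" "xi p" "eta p"
  by (rule acm_at[OF W pU])

lemma opn: "open U" using W unfolding weak_acm_def by blast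
lemma riem: "riemannian U g" using W unfolding weak_acm_def by blast
lemma mdf: "md f p" using W pU md_smooth unfolding weak_acm_def by blast
lemma mdQ: "md Q p" using W pU md_smooth unfolding weak_acm_def by blast
lemma mdg: "md g p" using W pU md_smooth riem unfolding riemannian_def by blast
lemma vdxi: "vd xi p" using W pU vd_smooth unfolding weak_acm_def by blast
lemma vdeta: "vd eta p" using W pU vd_smooth unfolding weak_acm_def by blast
lemma smxi: "smooth_vf U xi" using W unfolding weak_acm_def by blast
lemma smf: "smooth_tf U f" using W unfolding weak_acm_def by blast

lemma D1: "covT g f u p *v xi p = - (f p *v nab g u xi p)"
proof -
  have "nab g u (\<lambda>q. f q *v xi q) p = 0"
    by (rule nab_zero[OF opn pU]) (rule acmpt.Fx[OF acm_at[OF W]])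
  then show ?thesis unfolding nab_Mv[OF mdf vdxi] by (simp add: add_eq_0_iff)
qed

lemma D3: "eta p \<bullet> nab g u xi p = 0"
proof -
  have "dd u (\<lambda>q. xi q \<bullet> (g q *v xi q)) p = dd u (\<lambda>_. 1) p"
    by (rule dd_cong[OF opn pU]) (rule acmpt.gxx[OF acm_at[OF W]])
  then have "nab g u xi p \<bullet> (g p *v xi p) + xi p \<bullet> (g p *v nab g u xi p) = 0"
    unfolding MC[OF riem pU opn mdg vdxi vdxi] by simp
  then show ?thesis by (simp add: P.gx P.xg)
qed

lemma vd_fv: "vd (\<lambda>q. f q *v v) p"
  using vd_Mv[OF mdf, of "\<lambda>_. v"] by simp

lemma D4: "(covT g f u p *v v) \<bullet> (g p *v w) = - (v \<bullet> (g p *v (covT g f u p *v w)))"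
proof -
  have d1: "(\<lambda>q. (f q *v v) \<bullet> (g q *v w)) differentiable (at p)"
    by (rule dot_diff_at[OF vd_fv vd_Mv[OF mdg vd_const]])
  have d2: "(\<lambda>q. v \<bullet> (g q *v (f q *v w))) differentiable (at p)"
    by (rule dot_diff_at[OF vd_const vd_Mv[OF mdg vd_fv]])
  have "dd u (\<lambda>q. (f q *v v) \<bullet> (g q *v w) + v \<bullet> (g q *v (f q *v w))) p = dd u (\<lambda>_. 0) p"
    by (rule dd_cong[OF opn pU]) (simp add: acmpt.Fskew[OF acm_at[OF W]])
  then have "dd u (\<lambda>q. (f q *v v) \<bullet> (g q *v w)) p + dd u (\<lambda>q. v \<bullet> (g q *v (f q *v w))) p = 0"
    using dd_add[OF d1 d2] by simp
  then have "nab g u (\<lambda>q. f q *v v) p \<bullet> (g p *v w) + (f p *v v) \<bullet> (g p *v nab g u (\<lambda>_. w) p)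
      + (nab g u (\<lambda>_. v) p \<bullet> (g p *v (f p *v w)) + v \<bullet> (g p *v nab g u (\<lambda>q. f q *v w) p)) = 0"
    using MC[OF riem pU opn mdg vd_fv vd_const, of u v w]
      MC[OF riem pU opn mdg vd_const vd_fv, of u v w] by simp
  then have "(covT g f u p *v v + f p *v (GM g u p *v v)) \<bullet> (g p *v w)
      + (f p *v v) \<bullet> (g p *v (GM g u p *v w))
      + ((GM g u p *v v) \<bullet> (g p *v (f p *v w))
      + v \<bullet> (g p *v (covT g f u p *v w + f p *v (GM g u p *v w)))) = 0"
    using nab_Mv[OF mdf vd_const, of g u] by (simp add: nab_const)
  then show ?thesis
    by (simp add: algebra_simps inner_add_left inner_add_right P.Fskew)
qed

lemma deta:
  "dd u (\<lambda>q. eta q \<bullet> v) p = eta p \<bullet> (GM g u p *v v) + nab g u xi p \<bullet> (g p *v v)"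
proof -
  have "dd u (\<lambda>q. eta q \<bullet> v) p = dd u (\<lambda>q. v \<bullet> (g q *v xi q)) p"
    by (rule dd_cong[OF opn pU]) (simp add: acmpt.Gx[OF acm_at[OF W]] inner_commute)
  also have "\<dots> = (GM g u p *v v) \<bullet> (g p *v xi p) + v \<bullet> (g p *v nab g u xi p)"
    unfolding MC[OF riem pU opn mdg vd_const vdxi] nab_const ..
  finally show ?thesis by (simp add: P.gx P.gsym[of v])
qed

lemma eta_v_diff: "(\<lambda>q. eta q \<bullet> v) differentiable (at p)"
  by (rule dot_diff_at[OF vdeta vd_const])

lemma E: "covT g f u p *v (f p *v v) + f p *v (covT g f u p *v v) + covT g Q u p *v v
    = (nab g u xi p \<bullet> (g p *v v)) *\<^sub>R xi p + (eta p \<bullet> v) *\<^sub>R nab g u xi p"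
proof -
  have vQ: "vd (\<lambda>q. Q q *v v) p" using vd_Mv[OF mdQ, of "\<lambda>_. v"] by simp
  have vff: "vd (\<lambda>q. f q *v (f q *v v)) p" by (rule vd_Mv[OF mdf vd_fv])
  have ve: "vd (\<lambda>q. (eta q \<bullet> v) *\<^sub>R xi q) p" by (rule vd_scale[OF eta_v_diff vdxi])
  have "nab g u (\<lambda>q. (f q *v (f q *v v) + Q q *v v) - (eta q \<bullet> v) *\<^sub>R xi q) p = 0"
    by (rule nab_zero[OF opn pU]) (simp add: acmpt.FF[OF acm_at[OF W]])
  then have "nab g u (\<lambda>q. f q *v (f q *v v)) p + nab g u (\<lambda>q. Q q *v v) p
      - nab g u (\<lambda>q. (eta q \<bullet> v) *\<^sub>R xi q) p = 0"
    using nab_diff[OF vd_add[OF vff vQ] ve, of g u] nab_add[OF vff vQ, of g u] by simp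
  then have "covT g f u p *v (f p *v v) + f p *v (covT g f u p *v v + f p *v (GM g u p *v v))
      + (covT g Q u p *v v + Q p *v (GM g u p *v v))
      - ((eta p \<bullet> (GM g u p *v v) + nab g u xi p \<bullet> (g p *v v)) *\<^sub>R xi p + (eta p \<bullet> v) *\<^sub>R nab g u xi p) = 0"
    unfolding nab_Mv[OF mdf vd_fv] nab_Mv[OF mdf vd_const] nab_Mv[OF mdQ vd_const]
      nab_scale[OF eta_v_diff vdxi] deta nab_const by simp
  moreover have "f p *v (f p *v (GM g u p *v v)) + Q p *v (GM g u p *v v)
      = (eta p \<bullet> (GM g u p *v v)) *\<^sub>R xi p"
    by (simp add: P.FF)
  ultimately have "covT g Q u p *v v +
      (Q p *v (GM g u p *v v) +
       (f p *v (covT g f u p *v v) +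
        (covT g f u p *v (f p *v v) + f p *v (f p *v (GM g u p *v v))))) =
      (eta p \<bullet> v) *\<^sub>R nab g u xi p +
      ((eta p \<bullet> (GM g u p *v v)) *\<^sub>R xi p +
       (nab g u xi p \<bullet> (g p *v v)) *\<^sub>R xi p)"
    "Q p *v (GM g u p *v v) + f p *v (f p *v (GM g u p *v v)) =
      (eta p \<bullet> (GM g u p *v v)) *\<^sub>R xi p"
    by (simp_all add: algebra_simps)
  from abel5[OF this] show ?thesis by (simp add: algebra_simps)
qed

end



lemma sc2a: "(2 * a) *\<^sub>R x = a *\<^sub>R x + a *\<^sub>R (x::'a::real_vector)"
  by (metis mult_2 scaleR_left_distrib)
lemma sc2: "(2 * a) *\<^sub>R x - a *\<^sub>R x - 1 *\<^sub>R v = a *\<^sub>R x - (v::'a::real_vector)"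
  unfolding sc2a by simp
lemma sc2b: "(2 * a) *\<^sub>R x - a *\<^sub>R x - a *\<^sub>R x = (0::'a::real_vector)"
  unfolding sc2a by simp
lemma mv_uminus: "A *v (- v) = - (A *v (v::real^'n))" for A :: "real^'n^'m"
  by (simp add: matrix_vector_mult_def vec_eq_iff sum_negf)

locale wp2 = wp U f Q xi eta g p for U :: "(real^'m::finite) set" and f Q xi eta g p +
  fixes c :: real
  assumes H: "\<And>X Y. smooth_vf U X \<Longrightarrow> smooth_vf U Y \<Longrightarrow>
     nablaT g f X Y p + nablaT g f Y X p
       = c *\<^sub>R ((2 * gv g p (X p) (Y p)) *\<^sub>R xi p - (eta p \<bullet> Y p) *\<^sub>R X p - (eta p \<bullet> X p) *\<^sub>R Y p)"
begin

interpretation P: acmpt "g p" "f p" "Q p" "xi p" "eta p"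
  by (rule acm_at[OF W pU])

abbreviation "S \<equiv> covT g f (xi p) p"
abbreviation "A u \<equiv> nab g u xi p"

lemma H1: "S *v v - f p *v A v = c *\<^sub>R ((eta p \<bullet> v) *\<^sub>R xi p - v)"
proof -
  have h: "nablaT g f xi (\<lambda>_. v) p + nablaT g f (\<lambda>_. v) xi p
     = c *\<^sub>R ((2 * gv g p (xi p) v) *\<^sub>R xi p - (eta p \<bullet> v) *\<^sub>R xi p - (eta p \<bullet> xi p) *\<^sub>R v)"
    by (rule H[OF smxi smooth_const_vf])
  have e1: "nablaT g f xi (\<lambda>_. v) p = S *v v" using nablaT_eq[OF mdf vd_const] by simp
  have e2: "nablaT g f (\<lambda>_. v) xi p = - (f p *v A v)" using nablaT_eq[OF mdf vdxi] D1 by simp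
  have e3: "gv g p (xi p) v = eta p \<bullet> v" unfolding gv_def by (rule P.xg)
  from h have "S *v v + - (f p *v A v) = c *\<^sub>R ((2 * (eta p \<bullet> v)) *\<^sub>R xi p - (eta p \<bullet> v) *\<^sub>R xi p - 1 *\<^sub>R v)"
    by (simp only: e1 e2 e3 P.ex)
  then show ?thesis by (simp only: sc2 diff_conv_add_uminus[symmetric])
qed

lemma H2: "f p *v A (xi p) = 0"
proof -
  have h: "nablaT g f xi xi p + nablaT g f xi xi p
     = c *\<^sub>R ((2 * gv g p (xi p) (xi p)) *\<^sub>R xi p - (eta p \<bullet> xi p) *\<^sub>R xi p - (eta p \<bullet> xi p) *\<^sub>R xi p)"
    by (rule H[OF smxi smxi])
  have e2: "nablaT g f xi xi p = - (f p *v A (xi p))" using nablaT_eq[OF mdf vdxi] D1 by simp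
  have e3: "gv g p (xi p) (xi p) = 1" unfolding gv_def by (rule P.gxx)
  from h have "- (f p *v A (xi p)) + - (f p *v A (xi p)) = c *\<^sub>R ((2 * 1) *\<^sub>R xi p - 1 *\<^sub>R xi p - 1 *\<^sub>R xi p)"
    by (simp only: e2 e3 P.ex)
  then have "- (f p *v A (xi p)) + - (f p *v A (xi p)) = 0" by (simp only: sc2b scaleR_zero_right)
  then show ?thesis by (simp add: vec_eq_iff)
qed

lemma Axi: "A (xi p) = 0"
proof -
  have "A (xi p) = (eta p \<bullet> A (xi p)) *\<^sub>R xi p" by (rule P.kerF[OF H2])
  then show ?thesis using D3 by simp
qed

lemma geodesic: "nabla g xi xi p = 0"
  using Axi by (simp add: nabla_nab)

lemma Sx: "S *v xi p = 0"
  using D1[of "xi p"] Axi by simp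

lemma eS: "eta p \<bullet> (S *v w) = 0"
proof -
  have "eta p \<bullet> (S *v w) = xi p \<bullet> (g p *v (S *v w))" by (simp add: P.xg)
  also have "\<dots> = - ((S *v xi p) \<bullet> (g p *v w))" using D4[of "xi p" "xi p" w] by simp
  finally show ?thesis by (simp add: Sx)
qed

end

locale wp3 = wp2 U f Q xi eta g p c for U :: "(real^'m::finite) set" and f Q xi eta g p c +
  assumes QT: "Qtilde_parallel_ker U Q eta g"
begin

interpretation P: acmpt "g p" "f p" "Q p" "xi p" "eta p"
  by (rule acm_at[OF W pU])

lemma covQ_F: "covT g Q (xi p) p *v (f p *v v) = 0"
proof -
  have sm: "smooth_vf U (\<lambda>q. f q *v v)" by (rule smooth_f_vec[OF opn smf])
  have "\<forall>q\<in>U. eta q \<bullet> (f q *v v) = 0" using acmpt.eF[OF acm_at[OF W]] by blast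
  then have "nablaT g (\<lambda>q. Q q - mat 1) (\<lambda>_. xi p) (\<lambda>q. f q *v v) p = 0"
    using QT smooth_const_vf sm pU unfolding Qtilde_parallel_ker_def by blast
  then have "covT g (\<lambda>q. Q q - mat 1) (xi p) p *v (f p *v v) = 0"
    using nablaT_eq[OF md_diff[OF mdQ md_const] vd_fv] by simp
  moreover have "covT g (\<lambda>q. Q q - mat 1) (xi p) p *v w = covT g Q (xi p) p *v w" for w
    unfolding covT_def DM_diff[OF mdQ md_const]
    by (simp add: algebra_simps matrix_vector_mul_assoc[symmetric])
  ultimately show ?thesis by simp
qed

lemma covQ_xi: "covT g Q (xi p) p *v xi p = 0"
proof -
  have "nab g (xi p) (\<lambda>q. Q q *v xi q) p = nab g (xi p) xi p"
    by (rule nab_cong[OF opn pU]) (rule acmpt.Qx[OF acm_at[OF W]])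
  then show ?thesis unfolding nab_Mv[OF mdQ vdxi] Axi by simp
qed

lemma covQ0: "covT g Q (xi p) p *v w = 0"
proof -
  define w' where "w' = w - (eta p \<bullet> w) *\<^sub>R xi p"
  have ew': "eta p \<bullet> w' = 0" unfolding w'_def by (simp add: inner_diff_right P.ex)
  define z where "z = matrix_inv (Q p) *v w'"
  have Qz: "Q p *v z = w'" unfolding z_def by (rule P.Qsurj)
  have ez: "eta p \<bullet> z = 0" using P.eQ[of z] Qz ew' by simp
  have "f p *v (f p *v z) = - w'" using P.FF[of z] ez Qz by simp
  then have w'F: "w' = f p *v (- (f p *v z))" by (simp add: mv_uminus)
  have "w = w' + (eta p \<bullet> w) *\<^sub>R xi p" unfolding w'_def by simp
  then have "covT g Q (xi p) p *v w = covT g Q (xi p) p *v w' + (eta p \<bullet> w) *\<^sub>R (covT g Q (xi p) p *v xi p)"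
    by (metis matrix_vector_right_distrib mv_scaleR)
  also have "\<dots> = 0" using covQ_F[of "- (f p *v z)"] covQ_xi w'F by simp
  finally show ?thesis .
qed

lemma anti: "S *v (f p *v v) + f p *v (S *v v) = 0"
  using E[of "xi p" v] covQ0[of v] Axi by simp

lemma Sf: "S *v (f p *v w) = - (f p *v (S *v w))"
  using anti[of w] by (simp add: eq_neg_iff_add_eq_0)

lemma SQ: "S *v (Q p *v v) = Q p *v (S *v v)"
proof -
  have a: "S *v (f p *v w) = - (f p *v (S *v w))" for w
    using anti[of w] by (simp add: eq_neg_iff_add_eq_0)
  have "S *v (f p *v (f p *v v)) = - (f p *v (S *v (f p *v v)))" by (rule a)
  also have "\<dots> = f p *v (f p *v (S *v v))" by (simp add: a mv_uminus)
  finally have "S *v (f p *v (f p *v v)) = f p *v (f p *v (S *v v))" .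
  then have "S *v ((eta p \<bullet> v) *\<^sub>R xi p - Q p *v v) = (eta p \<bullet> (S *v v)) *\<^sub>R xi p - Q p *v (S *v v)"
    by (simp only: P.FF)
  then show ?thesis by (simp add: matrix_vector_mult_diff_distrib mv_scaleR Sx eS)
qed

definition R where "R v = - (f p *v (S *v v)) - c *\<^sub>R (f p *v v)"

lemma QA: "Q p *v A v = R v"
proof -
  have FA: "f p *v A v = S *v v - c *\<^sub>R ((eta p \<bullet> v) *\<^sub>R xi p - v)" using H1[of v] by (simp add: algebra_simps)
  have "f p *v (f p *v A v) = (eta p \<bullet> A v) *\<^sub>R xi p - Q p *v A v" by (rule P.FF)
  then have "Q p *v A v = - (f p *v (f p *v A v))" using D3 by simp
  also have "\<dots> = R v" unfolding FA R_def by (simp add: algebra_simps mv_scaleR P.Fx)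
  finally show ?thesis .
qed

lemma R_skew: "R u \<bullet> (g p *v w) = - (u \<bullet> (g p *v R w))"
proof -
  have FS: "(f p *v (S *v u)) \<bullet> (g p *v w) = - (u \<bullet> (g p *v (f p *v (S *v w))))"
  proof -
    have "(f p *v (S *v u)) \<bullet> (g p *v w) = - ((S *v u) \<bullet> (g p *v (f p *v w)))" by (rule P.Fskew)
    also have "\<dots> = u \<bullet> (g p *v (S *v (f p *v w)))" using D4 by simp
    also have "\<dots> = - (u \<bullet> (g p *v (f p *v (S *v w))))" using anti[of w] by (simp add: eq_neg_iff_add_eq_0[symmetric] mv_uminus)
    finally show ?thesis .
  qed
  show ?thesis unfolding R_def
    by (simp add: algebra_simps inner_diff_left inner_diff_right mv_scaleR FS P.Fskew mv_uminus D4 Sf)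
qed

lemma RQ: "R (Q p *v v) = Q p *v R v"
  unfolding R_def by (simp add: SQ P.FQ matrix_vector_mult_diff_distrib mv_uminus mv_scaleR)

lemma A_skew: "A u \<bullet> (g p *v v) = - (u \<bullet> (g p *v A v))"
proof -
  define u' where "u' = matrix_inv (Q p) *v u"
  define v' where "v' = matrix_inv (Q p) *v v"
  have u: "u = Q p *v u'" unfolding u'_def by (simp add: P.Qsurj)
  have v: "v = Q p *v v'" unfolding v'_def by (simp add: P.Qsurj)
  have 1: "A u \<bullet> (g p *v v) = R u' \<bullet> (g p *v (Q p *v v'))"
  proof -
    have "A u \<bullet> (g p *v v) = (Q p *v A u) \<bullet> (g p *v v')" unfolding v by (rule P.Qsym)
    also have "\<dots> = R u \<bullet> (g p *v v')" by (simp add: QA)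
    also have "\<dots> = (Q p *v R u') \<bullet> (g p *v v')" unfolding u RQ ..
    also have "\<dots> = R u' \<bullet> (g p *v (Q p *v v'))" by (rule P.Qsym[symmetric])
    finally show ?thesis .
  qed
  have 2: "u \<bullet> (g p *v A v) = (Q p *v u') \<bullet> (g p *v R v')"
  proof -
    have "u \<bullet> (g p *v A v) = u' \<bullet> (g p *v (Q p *v A v))" unfolding u by (rule P.Qsym[symmetric])
    also have "\<dots> = u' \<bullet> (g p *v R v)" by (simp add: QA)
    also have "\<dots> = u' \<bullet> (g p *v (Q p *v R v'))" unfolding v RQ ..
    also have "\<dots> = (Q p *v u') \<bullet> (g p *v R v')" by (rule P.Qsym)
    finally show ?thesis .
  qed
  have "R u' \<bullet> (g p *v (Q p *v v')) = - (u' \<bullet> (g p *v R (Q p *v v')))" by (rule R_skew)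
  also have "\<dots> = - (u' \<bullet> (g p *v (Q p *v R v')))" by (simp add: RQ)
  also have "\<dots> = - ((Q p *v u') \<bullet> (g p *v R v'))" by (simp add: P.Qsym)
  finally show ?thesis using 1 2 by simp
qed

end



lemma axis_dot: "axis i 1 \<bullet> v = v $ i"
  by (simp add: cart_eq_inner_axis inner_commute)

lemma mv_axis: "(M *v axis j 1) $ k = M $ k $ j"
  by (simp add: matrix_vector_mult_def axis_def if_distrib[of "\<lambda>z. _ * z"] cong: if_cong)

lemma dd_axis: "dd (axis i 1) F p = pd i F p"
  by (simp add: dd_def axis_def if_distrib[of "\<lambda>z. z * _"] cong: if_cong)

context wp3
begin

interpretation P: acmpt "g p" "f p" "Q p" "xi p" "eta p"
  by (rule acm_at[OF W pU])

lemma killing_at: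
  "dir xi (\<lambda>q. g q $ i $ j) p
      + (\<Sum>k\<in>UNIV. g p $ k $ j * pd i (\<lambda>q. xi q $ k) p)
      + (\<Sum>k\<in>UNIV. g p $ i $ k * pd j (\<lambda>q. xi q $ k) p) = 0"
proof -
  let ?ei = "axis i (1::real)" and ?ej = "axis j (1::real)"
  have a: "(\<lambda>q. g q $ i $ j) = (\<lambda>q. ?ei \<bullet> (g q *v ?ej))"
    by (simp add: axis_dot mv_axis)
  have b: "dir xi (\<lambda>q. g q $ i $ j) p
      = (GM g (xi p) p *v ?ei) \<bullet> (g p *v ?ej) + ?ei \<bullet> (g p *v (GM g (xi p) p *v ?ej))"
    unfolding a dir_dd MC[OF riem pU opn mdg vd_const vd_const] nab_const ..
  have c: "(\<Sum>k\<in>UNIV. g p $ k $ j * pd i (\<lambda>q. xi q $ k) p) = DV xi ?ei p \<bullet> (g p *v ?ej)"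
    by (simp add: inner_vec_def DV_def dd_axis mv_axis mult.commute)
  have d: "(\<Sum>k\<in>UNIV. g p $ i $ k * pd j (\<lambda>q. xi q $ k) p) = ?ei \<bullet> (g p *v DV xi ?ej p)"
    by (simp add: axis_dot matrix_vector_mult_def DV_def dd_axis)
  have e: "GM g (xi p) p *v w = GM g w p *v xi p" for w
    by (rule GM_sym[OF riem pU opn])
  have "A ?ei \<bullet> (g p *v ?ej) + ?ei \<bullet> (g p *v A ?ej) = 0"
    using A_skew[of ?ei ?ej] by simp
  then show ?thesis unfolding b c d e nab_def
    by (simp add: algebra_simps inner_add_left inner_add_right)
qed

lemma no_contact:
  assumes c0: "c = 0"
  and C: "\<And>u v. d_eta eta (\<lambda>_. u) (\<lambda>_. v) p = gv g p u (f p *v v)"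
  shows "f p = 0"
proof -
  have lb: "lie_bracket (\<lambda>_. u) (\<lambda>_. v) p = 0" for u v :: "real^'m"
    by (simp add: lie_bracket_def dir_dd vec_eq_iff)
  have dA: "d_eta eta (\<lambda>_. u) (\<lambda>_. v) p = A u \<bullet> (g p *v v)" for u v
  proof -
    have "d_eta eta (\<lambda>_. u) (\<lambda>_. v) p
       = (1/2) * ((eta p \<bullet> (GM g u p *v v) + A u \<bullet> (g p *v v))
                - (eta p \<bullet> (GM g v p *v u) + A v \<bullet> (g p *v u)))"
      unfolding d_eta_def lb dir_dd deta by simp
    also have "\<dots> = (1/2) * (A u \<bullet> (g p *v v) - A v \<bullet> (g p *v u))"
      using GM_sym[OF riem pU opn, of u v] by simp
    also have "A v \<bullet> (g p *v u) = - (A u \<bullet> (g p *v v))"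
      using A_skew[of v u] P.gsym[of v "A u"] by simp
    finally show ?thesis by simp
  qed
  have AF: "A u = - (f p *v u)" for u
  proof (rule P.nondeg)
    fix v
    have "A u \<bullet> (g p *v v) = u \<bullet> (g p *v (f p *v v))" using C[of u v] dA[of u v] unfolding gv_def by simp
    also have "\<dots> = (- (f p *v u)) \<bullet> (g p *v v)" using P.Fskew[of u v] by simp
    finally show "A u \<bullet> (g p *v v) = (- (f p *v u)) \<bullet> (g p *v v)" .
  qed
  have Sv: "S *v v = (Q p *v v) - (eta p \<bullet> v) *\<^sub>R xi p" for v
  proof -
    have "S *v v = f p *v A v" using H1[of v] c0 by simp
    also have "\<dots> = - (f p *v (f p *v v))" by (simp add: AF mv_uminus)
    finally show ?thesis by (simp add: P.FF)
  qed
  have "f p *v v = 0" for v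
  proof -
    have "(S *v v) \<bullet> (g p *v v) = - ((S *v v) \<bullet> (g p *v v))"
      using D4[of "xi p" v v] P.gsym[of v "S *v v"] by simp
    then have 1: "(S *v v) \<bullet> (g p *v v) = 0" by simp
    have "(S *v v) \<bullet> (g p *v v) = (Q p *v v) \<bullet> (g p *v v) - (eta p \<bullet> v) * (eta p \<bullet> v)"
      unfolding Sv by (simp add: inner_diff_left P.xg)
    also have "\<dots> = (f p *v v) \<bullet> (g p *v (f p *v v))"
      using P.comp[of v v] P.Qsym[of v v] by simp
    finally have "(f p *v v) \<bullet> (g p *v (f p *v v)) = 0" using 1 by simp
    then show ?thesis using P.posG[of "f p *v v"] by (cases "f p *v v = 0") auto
  qed
  then show ?thesis by (simp add: matrix_eq)
qed

end



theorem mainTheorem7: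
  assumes "odd CARD('m::finite)" and "CARD('m) \<ge> 3"
  shows
   "(\<forall>(U::(real^'m) set) f Q xi eta g.
       (weak_nearly_sasakian U f Q xi eta g \<or> weak_nearly_cosymplectic U f Q xi eta g) \<longrightarrow>
         (\<forall>p\<in>U. nabla g xi xi p = 0) \<and>
         (Qtilde_parallel_ker U Q eta g \<longrightarrow> killing U g xi))
    \<and> \<not> (\<exists>(U::(real^'m) set) f Q xi eta g. U \<noteq> {} \<and>
         weak_nearly_cosymplectic U f Q xi eta g \<and> Qtilde_parallel_ker U Q eta g \<and>
         weak_contact_metric U f Q xi eta g)"
proof (intro conjI)
  show "\<forall>(U::(real^'m) set) f Q xi eta g.
       (weak_nearly_sasakian U f Q xi eta g \<or> weak_nearly_cosymplectic U f Q xi eta g) \<longrightarrow>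
         (\<forall>p\<in>U. nabla g xi xi p = 0) \<and>
         (Qtilde_parallel_ker U Q eta g \<longrightarrow> killing U g xi)"
  proof (intro allI impI)
    fix U :: "(real^'m) set" and f Q xi eta g
    assume h: "weak_nearly_sasakian U f Q xi eta g \<or> weak_nearly_cosymplectic U f Q xi eta g"
    have W: "weak_acm U f Q xi eta g"
      using h unfolding weak_nearly_sasakian_def weak_nearly_cosymplectic_def by blast
    obtain c where Hc: "\<forall>X Y. smooth_vf U X \<longrightarrow> smooth_vf U Y \<longrightarrow> (\<forall>p\<in>U.
        nablaT g f X Y p + nablaT g f Y X p
          = c *\<^sub>R ((2 * gv g p (X p) (Y p)) *\<^sub>R xi p - (eta p \<bullet> Y p) *\<^sub>R X p - (eta p \<bullet> X p) *\<^sub>R Y p))"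
    proof -
      from h show ?thesis
      proof
        assume "weak_nearly_sasakian U f Q xi eta g"
        then show ?thesis using that[of 1] unfolding weak_nearly_sasakian_def by simp
      next
        assume "weak_nearly_cosymplectic U f Q xi eta g"
        then show ?thesis using that[of 0] unfolding weak_nearly_cosymplectic_def by simp
      qed
    qed
    have wp2: "wp2 U f Q xi eta g p c" if "p \<in> U" for p
      unfolding wp2_def wp2_axioms_def wp_def using W Hc that by blast
    show "(\<forall>p\<in>U. nabla g xi xi p = 0) \<and> (Qtilde_parallel_ker U Q eta g \<longrightarrow> killing U g xi)"
    proof (intro conjI ballI impI)
      fix p assume "p \<in> U"
      then show "nabla g xi xi p = 0" using wp2.geodesic[OF wp2] by blast
    next
      assume QT: "Qtilde_parallel_ker U Q eta g"
      have wp3: "wp3 U f Q xi eta g p c" if "p \<in> U" for p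
        unfolding wp3_def wp3_axioms_def using wp2[OF that] QT by blast
      show "killing U g xi"
        unfolding killing_def using wp3.killing_at[OF wp3] by blast
    qed
  qed
next
  show "\<not> (\<exists>(U::(real^'m) set) f Q xi eta g. U \<noteq> {} \<and>
         weak_nearly_cosymplectic U f Q xi eta g \<and> Qtilde_parallel_ker U Q eta g \<and>
         weak_contact_metric U f Q xi eta g)"
  proof
    assume "\<exists>(U::(real^'m) set) f Q xi eta g. U \<noteq> {} \<and>
         weak_nearly_cosymplectic U f Q xi eta g \<and> Qtilde_parallel_ker U Q eta g \<and>
         weak_contact_metric U f Q xi eta g"
    then obtain U :: "(real^'m) set" and f Q xi eta g where ne: "U \<noteq> {}"
      and NC: "weak_nearly_cosymplectic U f Q xi eta g" and QT: "Qtilde_parallel_ker U Q eta g"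
      and CT: "weak_contact_metric U f Q xi eta g" by blast
    obtain p where pU: "p \<in> U" using ne by blast
    have W: "weak_acm U f Q xi eta g" using NC unfolding weak_nearly_cosymplectic_def by blast
    have wp3: "wp3 U f Q xi eta g p 0"
      unfolding wp3_def wp3_axioms_def wp2_def wp2_axioms_def wp_def
      using W pU QT NC unfolding weak_nearly_cosymplectic_def by simp
    have C: "d_eta eta (\<lambda>_. u) (\<lambda>_. v) p = gv g p u (f p *v v)" for u v
      using CT pU smooth_const_vf unfolding weak_contact_metric_def by blast
    have "f p = 0" by (rule wp3.no_contact[OF wp3 refl C])
    moreover have "rank (f p) = CARD('m) - 1" using W pU unfolding weak_acm_def by blast
    ultimately show False using assms(2) by (simp add: rank_0)
  qed
qed


end
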